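(* Let $\beta>1$. Then $$[0,1)\setminus\mathcal U=\bigcup_{r\in\mathbb Q_{(\beta)}}I_r^*.$$
   Context: Let $\gamma=\beta-1$ if $\beta$ is an integer and $\gamma=\lfloor\beta\rfloor$ otherwise. $T_\beta(x)=\beta x-\lfloor\beta x\rfloor$ on $[0,1)$. The greedy $\beta$-expansion of $x\in[0,1)$ is $b(x,\beta)=(b_i)$ with $b_i=\lfloor\beta T_\beta^{i-1}(x)\rfloor$. The quasi-greedy $\beta$-expansion $\alpha(\beta)$ of $1$ is the lexicographically largest sequence in $\{0,\dots,\gamma\}^{\mathbb N}$, not eventually zero, with $1=\sum_i\alpha(\beta)_i\beta^{-i}$. $\sigma$ is the left shift, $\prec,\preceq$ the lexicographic order, and $\pi((x_i))=\sum_i x_i\beta^{-i}$. $\Sigma_\beta=\{\omega\in\{0,\dots,\gamma\}^{\mathbb N}\colon\sigma^k(\omega)\prec\alpha(\beta)\ \forall k\ge0\}$. A number $r\in(0,1)$ is $\beta$-rational if $b(r,\beta)=r_1\cdots r_m0^\infty$ with $r_m\ne0$; $\mathbb Q_{(\beta)}$ is the set of such numbers. For such $r$ define $r^*$ as follows. If $(r_1\cdots r_m)^\infty\in\Sigma_\beta$, then $r^*=\pi((r_1\cdots r_m)^\infty)$. Otherwise, if $r_1=\gamma$, set $r^*=\pi(\alpha(\beta))=1$; if $r_1<\gamma$, start from $x^{(0)}=(r_1\cdots r_m)^\infty$ and, as long as $x^{(i)}\notin\Sigma_\beta$, let $j=\min\{k\ge0\colon\sigma^k(x^{(i)})\succeq\alpha(\beta)\}$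 (one has $j\ge1$) and set $x^{(i+1)}=x^{(i)}_1\cdots x^{(i)}_{j-1}(x^{(i)}_j+1)0^\infty$; this terminates after finitely many steps at a sequence $\tilde r'\in\Sigma_\beta$, and $r^*=\pi(\tilde r')$. Put $I_r^*=(r,r^* )$. For $0<t<1$ let $K(t)=\{x\in[0,1)\colon T_\beta^k(x)\notin(0,t)\ \forall k\ge0\}$, $K(0)=[0,1)$, $K(1)=\{0\}$. A parameter $t\in[0,1]$ is a bifurcation parameter if $t\in\{0,1\}$, or $0<t<1$ and for every $\delta>0$ there is $t'\in(t-\delta,t+\delta)$ with $K(t')\ne K(t)$; $\mathcal U$ is the set of bifurcation parameters in $[0,1)$. *)

theory Defs
  imports Complex_Main
begin

(* Conventions: digit sequences are maps nat => nat, indexed from 0,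
   so  w 0  is the paper's  w_1.  *)

definition gam :: "real \<Rightarrow> nat" where
  "gam \<beta> = (if \<beta> \<in> \<int> then nat \<lfloor>\<beta>\<rfloor> - 1 else nat \<lfloor>\<beta>\<rfloor>)"

definition Tb :: "real \<Rightarrow> real \<Rightarrow> real" where
  "Tb \<beta> x = \<beta> * x - of_int \<lfloor>\<beta> * x\<rfloor>"

definition greedy :: "real \<Rightarrow> real \<Rightarrow> nat \<Rightarrow> nat" where
  "greedy \<beta> x i = nat \<lfloor>\<beta> * (Tb \<beta> ^^ i) x\<rfloor>"

definition piv :: "real \<Rightarrow> (nat \<Rightarrow> nat) \<Rightarrow> real" where
  "piv \<beta> w = (\<Sum>i. real (w i) / \<beta> ^ Suc i)"

definition lex_less :: "(nat \<Rightarrow> nat) \<Rightarrow> (nat \<Rightarrow> nat) \<Rightarrow> bool" where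
  "lex_less x y = (\<exists>n. (\<forall>i<n. x i = y i) \<and> x n < y n)"

definition lex_le :: "(nat \<Rightarrow> nat) \<Rightarrow> (nat \<Rightarrow> nat) \<Rightarrow> bool" where
  "lex_le x y = (lex_less x y \<or> x = y)"

definition shift :: "nat \<Rightarrow> (nat \<Rightarrow> nat) \<Rightarrow> nat \<Rightarrow> nat" where
  "shift k w = (\<lambda>i. w (i + k))"

definition qg_cands :: "real \<Rightarrow> (nat \<Rightarrow> nat) set" where
  "qg_cands \<beta> = {w. (\<forall>i. w i \<le> gam \<beta>) \<and> (\<forall>N. \<exists>i\<ge>N. w i \<noteq> 0) \<and> piv \<beta> w = 1}"

(* quasi-greedy expansion of 1: the lexicographically largest candidate *)
definition alpha :: "real \<Rightarrow> nat \<Rightarrow> nat" where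
  "alpha \<beta> = (THE w. w \<in> qg_cands \<beta> \<and> (\<forall>v\<in>qg_cands \<beta>. lex_le v w))"

definition SigmaB :: "real \<Rightarrow> (nat \<Rightarrow> nat) set" where
  "SigmaB \<beta> = {w. (\<forall>i. w i \<le> gam \<beta>) \<and> (\<forall>k. lex_less (shift k w) (alpha \<beta>))}"

definition beta_rational :: "real \<Rightarrow> real \<Rightarrow> bool" where
  "beta_rational \<beta> r = (0 < r \<and> r < 1 \<and>
     (\<exists>m>0. greedy \<beta> r (m - 1) \<noteq> 0 \<and> (\<forall>i\<ge>m. greedy \<beta> r i = 0)))"

definition QB :: "real \<Rightarrow> real set" where
  "QB \<beta> = {r. beta_rational \<beta> r}"

definition rlen :: "real \<Rightarrow> real \<Rightarrow> nat" where
  "rlen \<beta> r = (THE m. m > 0 \<and> greedy \<beta> r (m - 1) \<noteq> 0 \<and> (\<forall>i\<ge>m. greedy \<beta> r i = 0))"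

definition rper :: "real \<Rightarrow> real \<Rightarrow> nat \<Rightarrow> nat" where
  "rper \<beta> r = (\<lambda>i. greedy \<beta> r (i mod rlen \<beta> r))"

(* one step of the algorithm: j = min{k \<ge> 0. \<sigma>^k x \<succeq> \<alpha>(\<beta>)};
   x_1...x_{j-1} (x_j + 1) 0^\<infinity>   (0-indexed: positions < j-1 kept, position j-1 incremented) *)
definition rstep :: "real \<Rightarrow> (nat \<Rightarrow> nat) \<Rightarrow> nat \<Rightarrow> nat" where
  "rstep \<beta> x = (let j = (LEAST k. lex_le (alpha \<beta>) (shift k x)) in
     (\<lambda>i. if i < j - 1 then x i else if i = j - 1 then x i + 1 else 0))"

definition rtilde :: "real \<Rightarrow> real \<Rightarrow> nat \<Rightarrow> nat" where
  "rtilde \<beta> r = (let x0 = rper \<beta> r;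
                     n = (LEAST n. (rstep \<beta> ^^ n) x0 \<in> SigmaB \<beta>) in (rstep \<beta> ^^ n) x0)"

definition rstar :: "real \<Rightarrow> real \<Rightarrow> real" where
  "rstar \<beta> r = (if rper \<beta> r \<in> SigmaB \<beta> then piv \<beta> (rper \<beta> r)
                else if greedy \<beta> r 0 = gam \<beta> then piv \<beta> (alpha \<beta>)
                else piv \<beta> (rtilde \<beta> r))"

definition Istar :: "real \<Rightarrow> real \<Rightarrow> real set" where
  "Istar \<beta> r = {r<..<rstar \<beta> r}"

definition Kset :: "real \<Rightarrow> real \<Rightarrow> real set" where
  "Kset \<beta> t = (if t = 0 then {0..<1} else if t = 1 then {0}
               else {x \<in> {0..<1}. \<forall>k. (Tb \<beta> ^^ k) x \<notin> {0<..<t}})"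

definition bifurcation :: "real \<Rightarrow> real \<Rightarrow> bool" where
  "bifurcation \<beta> t = (t = 0 \<or> t = 1 \<or>
     (0 < t \<and> t < 1 \<and> (\<forall>\<delta>>0. \<exists>t'\<in>{0..1}. \<bar>t' - t\<bar> < \<delta> \<and> Kset \<beta> t' \<noteq> Kset \<beta> t)))"

definition Ubif :: "real \<Rightarrow> real set" where
  "Ubif \<beta> = {t \<in> {0..<1}. bifurcation \<beta> t}"

end

theory Submission
  imports Defs
begin



section \<open>Lexicographic order\<close>

lemma first_diff:
  assumes "x \<noteq> (y::nat\<Rightarrow>nat)"
  obtains n where "\<forall>i<n. x i = y i" "x n \<noteq> y n"
proof -
  have ex: "\<exists>n. x n \<noteq> y n" using assms by auto
  define n where "n = (LEAST n. x n \<noteq> y n)"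
  have "x n \<noteq> y n" unfolding n_def by (rule LeastI_ex) (rule ex)
  moreover have "\<forall>i<n. x i = y i" unfolding n_def using not_less_Least by blast
  ultimately show ?thesis using that by blast
qed

lemma lex_less_irrefl: "\<not> lex_less x x"
  by (auto simp: lex_less_def)

lemma lex_total: "lex_less x y \<or> x = y \<or> lex_less y x"
proof (cases "x = y")
  case False
  then obtain n where n: "\<forall>i<n. x i = y i" "x n \<noteq> y n" by (rule first_diff)
  show ?thesis
  proof (cases "x n < y n")
    case True then show ?thesis using n unfolding lex_less_def by blast
  next
    case False then have "y n < x n" using n by simp
    then show ?thesis using n unfolding lex_less_def by (metis)
  qed
qed simp

lemma lex_less_trans:
  assumes "lex_less x y" "lex_less y z" shows "lex_less x z"
proof -
  obtain n1 where n1: "\<forall>i<n1. x i = y i" "x n1 < y n1" using assms(1) unfolding lex_less_def by blast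
  obtain n2 where n2: "\<forall>i<n2. y i = z i" "y n2 < z n2" using assms(2) unfolding lex_less_def by blast
  show ?thesis
  proof (cases "n1 < n2")
    case True
    then show ?thesis unfolding lex_less_def using n1 n2
      by (intro exI[of _ n1]) auto
  next
    case False
    show ?thesis unfolding lex_less_def using n1 n2 False
      by (intro exI[of _ n2]) (metis le_less less_trans not_le)
  qed
qed

lemma lex_less_asym: "lex_less x y \<Longrightarrow> \<not> lex_less y x"
  using lex_less_trans lex_less_irrefl by blast

lemma lex_le_trans: "lex_le x y \<Longrightarrow> lex_le y z \<Longrightarrow> lex_le x z"
  unfolding lex_le_def using lex_less_trans by blast

lemma lex_le_less_trans: "lex_le x y \<Longrightarrow> lex_less y z \<Longrightarrow> lex_less x z"
  unfolding lex_le_def using lex_less_trans by blast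

lemma lex_less_le_trans: "lex_less x y \<Longrightarrow> lex_le y z \<Longrightarrow> lex_less x z"
  unfolding lex_le_def using lex_less_trans by blast

lemma lex_not_less: "\<not> lex_less x y \<longleftrightarrow> lex_le y x"
  unfolding lex_le_def using lex_total lex_less_asym lex_less_irrefl by blast

lemma lex_le_antisym: "lex_le x y \<Longrightarrow> lex_le y x \<Longrightarrow> x = y"
  unfolding lex_le_def using lex_less_asym by blast

lemma lex_lessI: "\<forall>i<n. x i = y i \<Longrightarrow> x n < y n \<Longrightarrow> lex_less x y"
  unfolding lex_less_def by blast

lemma shift_0[simp]: "shift 0 w = w" by (simp add: shift_def)
lemma shift_apply: "shift k w i = w (i + k)" by (simp add: shift_def)
lemma shift_shift: "shift j (shift k w) = shift (j + k) w"
  by (simp add: shift_def ac_simps)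

definition bd :: "(nat \<Rightarrow> nat) \<Rightarrow> bool" where "bd w = (\<exists>B. \<forall>i. w i \<le> B)"

lemma bd_shift: "bd w \<Longrightarrow> bd (shift k w)"
  unfolding bd_def by (auto simp: shift_apply)

context
  fixes \<beta> :: real
  assumes b1: "\<beta> > 1"
begin

lemma summable_piv:
  assumes "\<forall>i. w i \<le> B"
  shows "summable (\<lambda>i. real (w i) / \<beta> ^ Suc i)"
proof (rule summable_comparison_test')
  show "summable (\<lambda>i. (real B / \<beta>) * (1/\<beta>) ^ i)"
    using b1 by (intro summable_mult summable_geometric) auto
  fix n
  have "real (w n) / \<beta> ^ Suc n \<le> real B / \<beta> ^ Suc n"
    using assms b1 by (intro divide_right_mono) auto
  then show "norm (real (w n) / \<beta> ^ Suc n) \<le> (real B / \<beta>) * (1/\<beta>) ^ n"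
    using b1 by (simp add: power_divide field_simps)
qed

lemma piv_nonneg: "\<forall>i. w i \<le> B \<Longrightarrow> 0 \<le> piv \<beta> w"
  unfolding piv_def using b1 by (intro suminf_nonneg summable_piv) auto



lemma bd_summable: "bd w \<Longrightarrow> summable (\<lambda>i. real (w i) / \<beta> ^ Suc i)"
  unfolding bd_def using summable_piv by blast

lemma bd_nonneg: "bd w \<Longrightarrow> 0 \<le> piv \<beta> w"
  unfolding bd_def using piv_nonneg by blast

lemma piv_step:
  assumes "bd w"
  shows "piv \<beta> w = (w 0 + piv \<beta> (shift 1 w)) / \<beta>"
proof -
  let ?f = "\<lambda>i. real (w i) / \<beta> ^ Suc i"
  have s: "summable ?f" using bd_summable[OF assms] .
  have s1: "summable (\<lambda>i. real (w (i+1)) / \<beta> ^ Suc i)"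
    using bd_summable[OF bd_shift[OF assms, of 1]] by (simp add: shift_apply)
  have "(\<Sum>i. ?f (Suc i)) = suminf ?f - ?f 0" using suminf_split_head[OF s] .
  moreover have "(\<Sum>i. ?f (Suc i)) = (\<Sum>i. real (w (i+1)) / \<beta> ^ Suc i / \<beta>)"
    by (simp add: field_simps)
  moreover have "\<dots> = (\<Sum>i. real (w (i+1)) / \<beta> ^ Suc i) / \<beta>"
    using suminf_divide[OF s1] .
  ultimately have "suminf ?f = ?f 0 + (\<Sum>i. real (w (i+1)) / \<beta> ^ Suc i) / \<beta>" by simp
  then show ?thesis unfolding piv_def shift_def by (simp add: add_divide_distrib)
qed

lemma piv_shift_step:
  assumes "bd w"
  shows "piv \<beta> (shift n w) = (w n + piv \<beta> (shift (Suc n) w)) / \<beta>"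
proof -
  have "shift n w 0 = w n" by (simp add: shift_apply)
  then show ?thesis using piv_step[OF bd_shift[OF assms, of n]] by (simp add: shift_shift)
qed

lemma piv_diff:
  assumes "bd v" "bd w" "\<forall>i<n. v i = w i"
  shows "piv \<beta> v - piv \<beta> w = (piv \<beta> (shift n v) - piv \<beta> (shift n w)) / \<beta> ^ n"
  using assms(3)
proof (induction n)
  case 0 then show ?case by simp
next
  case (Suc n)
  then have "piv \<beta> v - piv \<beta> w = (piv \<beta> (shift n v) - piv \<beta> (shift n w)) / \<beta> ^ n" by simp
  also have "piv \<beta> (shift n v) - piv \<beta> (shift n w) = (piv \<beta> (shift (Suc n) v) - piv \<beta> (shift (Suc n) w)) / \<beta>"
    using piv_shift_step[OF assms(1), of n] piv_shift_step[OF assms(2), of n] Suc.prems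
    by (simp add: diff_divide_distrib add_divide_distrib)
  finally show ?case by simp
qed

lemma piv_pos:
  assumes "bd w" "w i \<noteq> 0"
  shows "0 < piv \<beta> w"
  unfolding piv_def
  by (rule suminf_pos2[OF bd_summable[OF assms(1)], of i]) (use b1 assms(2) in auto)

lemma piv_mono:
  assumes "bd v" "\<forall>i. w i \<le> v i"
  shows "piv \<beta> w \<le> piv \<beta> v"
proof -
  have "bd w" using assms unfolding bd_def by (meson order_trans)
  then show ?thesis unfolding piv_def using assms b1
    by (intro suminf_le bd_summable) (auto intro!: divide_right_mono)
qed

lemma piv_le:
  fixes B :: nat
  assumes "\<forall>i. w i \<le> B"
  shows "piv \<beta> w \<le> B / (\<beta> - 1)"
proof -
  have g: "(\<lambda>i. (real B / \<beta>) * (1/\<beta>) ^ i) sums ((real B / \<beta>) * (1 / (1 - 1/\<beta>)))"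
    using b1 by (intro sums_mult geometric_sums) auto
  have "piv \<beta> w \<le> (real B / \<beta>) * (1 / (1 - 1/\<beta>))"
    unfolding piv_def
  proof (rule suminf_le[OF _ summable_piv[OF assms] sums_summable[OF g], THEN order_trans])
    fix n
    have "real (w n) / \<beta> ^ Suc n \<le> real B / \<beta> ^ Suc n"
      using assms b1 by (intro divide_right_mono) auto
    moreover have "(real B / \<beta>) * (1/\<beta>) ^ n = real B / \<beta> ^ Suc n"
      by (simp add: power_one_over)
    ultimately show "real (w n) / \<beta> ^ Suc n \<le> (real B / \<beta>) * (1/\<beta>) ^ n"
      by simp
  next
    show "(\<Sum>i. real B / \<beta> * (1 / \<beta>) ^ i) \<le> real B / \<beta> * (1 / (1 - 1 / \<beta>))"
      using sums_unique[OF g] by simp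
  qed
  also have "\<dots> = B / (\<beta> - 1)" using b1 by (simp add: divide_simps)
  finally show ?thesis .
qed

lemma piv_zero[simp]: "piv \<beta> (\<lambda>_. 0) = 0"
  unfolding piv_def by simp

lemma bd_zero[simp]: "bd (\<lambda>_. 0)" unfolding bd_def by auto

lemma zero_by_contraction:
  fixes e :: "nat \<Rightarrow> real"
  assumes rec: "\<forall>k. e k = e (Suc k) / \<beta>" and bnd: "\<forall>k. \<bar>e k\<bar> \<le> C"
  shows "e k = 0"
proof (rule ccontr)
  assume ne: "e k \<noteq> 0"
  have pw: "e k = e (k + N) / \<beta> ^ N" for N
  proof (induction N)
    case 0 then show ?case by simp
  next
    case (Suc N)
    have "e (k + N) = e (k + Suc N) / \<beta>" using rec[rule_format, of "k+N"] by simp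
    then show ?case using Suc.IH b1 by (simp add: field_simps)
  qed
  have Cpos: "C > 0" using bnd[rule_format, of k] ne by linarith
  obtain N where N: "C / \<bar>e k\<bar> < \<beta> ^ N" using real_arch_pow[OF b1] by blast
  have "\<bar>e k\<bar> * \<beta> ^ N = \<bar>e (k + N)\<bar>" using pw[of N] b1 by (simp add: abs_divide abs_mult)
  also have "\<dots> \<le> C" using bnd by blast
  finally have "\<beta> ^ N \<le> C / \<bar>e k\<bar>" using ne by (simp add: pos_le_divide_eq mult.commute)
  then show False using N by simp
qed

end



fun qc :: "real \<Rightarrow> nat \<Rightarrow> real" where
  "qc b 0 = 1"
| "qc b (Suc n) = b * qc b n - (of_int \<lceil>b * qc b n\<rceil> - 1)"

definition qd :: "real \<Rightarrow> nat \<Rightarrow> nat" where "qd b n = nat (\<lceil>b * qc b n\<rceil> - 1)"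

lemma gam_ceil: "gam \<beta> = nat \<lceil>\<beta>\<rceil> - 1"
proof (cases "\<beta> \<in> \<int>")
  case True
  then obtain z where "\<beta> = of_int z" by (auto elim: Ints_cases)
  then show ?thesis using True by (simp add: gam_def)
next
  case False
  then have "\<beta> \<noteq> of_int \<lfloor>\<beta>\<rfloor>" by (metis Ints_of_int)
  then have "\<lceil>\<beta>\<rceil> = \<lfloor>\<beta>\<rfloor> + 1" by (simp add: ceiling_altdef)
  then show ?thesis using False by (simp add: gam_def nat_add_distrib)
qed

context
  fixes \<beta> :: real
  assumes b1: "\<beta> > 1"
begin

lemma gam_real: "real (gam \<beta>) = of_int \<lceil>\<beta>\<rceil> - 1"
proof -
  have c: "\<lceil>\<beta>\<rceil> \<ge> 2" using b1 by (simp add: le_ceiling_iff)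
  then have "nat \<lceil>\<beta>\<rceil> \<ge> 1" by arith
  then have "real (nat \<lceil>\<beta>\<rceil> - 1) = real (nat \<lceil>\<beta>\<rceil>) - 1" by (simp add: of_nat_diff)
  also have "real (nat \<lceil>\<beta>\<rceil>) = of_int \<lceil>\<beta>\<rceil>" using c by simp
  finally show ?thesis by (simp add: gam_ceil)
qed

lemma gam_lt: "real (gam \<beta>) < \<beta>"
  using gam_real by linarith

lemma gam_ge: "\<beta> - 1 \<le> real (gam \<beta>)"
  using gam_real by linarith

lemma gam_pos: "gam \<beta> \<ge> 1"
proof -
  have "\<lceil>\<beta>\<rceil> \<ge> 2" using b1 by (simp add: le_ceiling_iff)
  then have "real (gam \<beta>) \<ge> 1" using gam_real by simp
  then show ?thesis by simp
qed

lemma qc_bounds: "0 < qc \<beta> n \<and> qc \<beta> n \<le> 1"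
proof (induction n)
  case 0 then show ?case by simp
next
  case (Suc n)
  let ?x = "\<beta> * qc \<beta> n"
  have "of_int \<lceil>?x\<rceil> - 1 < ?x" "?x \<le> of_int \<lceil>?x\<rceil>" by linarith+
  then show ?case by simp
qed

lemma qd_real: "real (qd \<beta> n) = of_int \<lceil>\<beta> * qc \<beta> n\<rceil> - 1"
proof -
  have "\<beta> * qc \<beta> n > 0" using qc_bounds[of n] b1 by simp
  then have "\<lceil>\<beta> * qc \<beta> n\<rceil> \<ge> 1" by (simp add: le_ceiling_iff)
  then show ?thesis unfolding qd_def by simp
qed

lemma qc_rec: "qc \<beta> n = (qd \<beta> n + qc \<beta> (Suc n)) / \<beta>"
  using b1 by (simp add: qd_real)

lemma qd_le: "qd \<beta> n \<le> gam \<beta>"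
proof -
  have "\<beta> * qc \<beta> n \<le> \<beta>" using qc_bounds[of n] b1 by simp
  then have "\<lceil>\<beta> * qc \<beta> n\<rceil> \<le> \<lceil>\<beta>\<rceil>" by (rule ceiling_mono)
  then show ?thesis unfolding qd_def gam_ceil by linarith
qed

lemma qd_0: "qd \<beta> 0 = gam \<beta>"
  by (simp add: qd_def gam_ceil nat_diff_distrib)

lemma bd_qd: "bd (qd \<beta>)"
  unfolding bd_def using qd_le by blast

lemma piv_qd: "piv \<beta> (shift n (qd \<beta>)) = qc \<beta> n"
proof -
  define e where "e k = piv \<beta> (shift k (qd \<beta>)) - qc \<beta> k" for k
  have "\<forall>k. e k = e (Suc k) / \<beta>"
  proof
    fix k
    show "e k = e (Suc k) / \<beta>"
      unfolding e_def using piv_shift_step[OF b1 bd_qd, of k] qc_rec[of k]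
      by (simp add: diff_divide_distrib add_divide_distrib)
  qed
  moreover have "\<forall>k. \<bar>e k\<bar> \<le> gam \<beta> / (\<beta> - 1) + 1"
  proof
    fix k
    have "piv \<beta> (shift k (qd \<beta>)) \<le> gam \<beta> / (\<beta> - 1)"
      using piv_le[OF b1, of "shift k (qd \<beta>)" "gam \<beta>"] qd_le by (simp add: shift_apply)
    moreover have "0 \<le> piv \<beta> (shift k (qd \<beta>))" using bd_nonneg[OF b1 bd_shift[OF bd_qd]] .
    moreover have "0 \<le> gam \<beta> / (\<beta> - 1)" using b1 by simp
    ultimately show "\<bar>e k\<bar> \<le> gam \<beta> / (\<beta> - 1) + 1" unfolding e_def using qc_bounds[of k] by linarith
  qed
  ultimately have "e n = 0" by (rule zero_by_contraction[OF b1])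
  then show ?thesis unfolding e_def by simp
qed

lemma qd_not_ev_zero: "\<exists>i\<ge>N. qd \<beta> i \<noteq> 0"
proof (rule ccontr)
  assume "\<not> ?thesis"
  then have z: "\<forall>i\<ge>N. qd \<beta> i = 0" by auto
  have "qc \<beta> (N + k) = \<beta> ^ k * qc \<beta> N" for k
  proof (induction k)
    case 0 then show ?case by simp
  next
    case (Suc k)
    have "qc \<beta> (N + k) = (qd \<beta> (N+k) + qc \<beta> (Suc (N + k))) / \<beta>" by (rule qc_rec)
    then have "qc \<beta> (Suc (N + k)) = \<beta> * qc \<beta> (N + k)" using z b1 by (simp add: field_simps)
    then show ?case using Suc by simp
  qed
  moreover obtain k where k: "1 / qc \<beta> N < \<beta> ^ k" using real_arch_pow[OF b1] by blast
  ultimately have "qc \<beta> (N + k) = \<beta> ^ k * qc \<beta> N" by blast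
  moreover have "1 < \<beta> ^ k * qc \<beta> N" using k qc_bounds[of N] by (simp add: divide_less_eq)
  ultimately have "1 < qc \<beta> (N + k)" by simp
  then show False using qc_bounds[of "N+k"] by simp
qed

lemma qd_cand: "qd \<beta> \<in> qg_cands \<beta>"
  unfolding qg_cands_def using qd_le qd_not_ev_zero piv_qd[of 0] by simp

lemma cand_bd: "v \<in> qg_cands \<beta> \<Longrightarrow> bd v"
  unfolding qg_cands_def bd_def by blast

lemma qd_max:
  assumes v: "v \<in> qg_cands \<beta>"
  shows "lex_le v (qd \<beta>)"
proof (rule ccontr)
  assume "\<not> lex_le v (qd \<beta>)"
  then have "lex_less (qd \<beta>) v" using lex_not_less by blast
  then obtain n where n: "\<forall>i<n. qd \<beta> i = v i" "qd \<beta> n < v n" unfolding lex_less_def by blast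
  have bv: "bd v" using cand_bd[OF v] .
  have pv: "piv \<beta> v = 1" using v unfolding qg_cands_def by simp
  have "piv \<beta> v - piv \<beta> (qd \<beta>) = (piv \<beta> (shift n v) - piv \<beta> (shift n (qd \<beta>))) / \<beta> ^ n"
    using piv_diff[OF b1 bv bd_qd, of n] n(1) by simp
  then have eq: "piv \<beta> (shift n v) = qc \<beta> n" using pv piv_qd[of 0] piv_qd[of n] b1 by simp
  obtain i where i: "i \<ge> Suc n" "v i \<noteq> 0" using v unfolding qg_cands_def by blast
  have "shift (Suc n) v (i - Suc n) \<noteq> 0" using i by (simp add: shift_apply)
  then have "0 < piv \<beta> (shift (Suc n) v)"
    using piv_pos[OF b1 bd_shift[OF bv]] by blast
  moreover have "piv \<beta> (shift n v) = (v n + piv \<beta> (shift (Suc n) v)) / \<beta>"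
    using piv_shift_step[OF b1 bv] .
  moreover have "real (v n) \<ge> of_int \<lceil>\<beta> * qc \<beta> n\<rceil>" using n(2) qd_real[of n] by linarith
  moreover have "of_int \<lceil>\<beta> * qc \<beta> n\<rceil> \<ge> \<beta> * qc \<beta> n" by linarith
  ultimately have "\<beta> * qc \<beta> n < \<beta> * piv \<beta> (shift n v)" using b1
    by (simp add: field_simps) (smt (verit) le_of_int_ceiling)
  then have "piv \<beta> (shift n v) > qc \<beta> n" using b1 by simp
  then show False using eq by simp
qed

lemma alpha_eq: "alpha \<beta> = qd \<beta>"
  unfolding alpha_def
proof (rule the_equality)
  show "qd \<beta> \<in> qg_cands \<beta> \<and> (\<forall>v\<in>qg_cands \<beta>. lex_le v (qd \<beta>))" using qd_cand qd_max by blast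
  fix w assume "w \<in> qg_cands \<beta> \<and> (\<forall>v\<in>qg_cands \<beta>. lex_le v w)"
  then show "w = qd \<beta>" using qd_cand qd_max lex_le_antisym by blast
qed

lemma alpha_0: "alpha \<beta> 0 = gam \<beta>" using alpha_eq qd_0 by simp
lemma bd_alpha: "bd (alpha \<beta>)" using alpha_eq bd_qd by simp
lemma piv_alpha_shift: "0 < piv \<beta> (shift n (alpha \<beta>)) \<and> piv \<beta> (shift n (alpha \<beta>)) \<le> 1"
  using alpha_eq piv_qd qc_bounds by simp
lemma piv_alpha: "piv \<beta> (alpha \<beta>) = 1" using alpha_eq piv_qd[of 0] by simp
lemma alpha_nz: "\<exists>i\<ge>N. alpha \<beta> i \<noteq> 0" using alpha_eq qd_not_ev_zero by simp

end



lemma Tb_range: "0 \<le> Tb \<beta> x \<and> Tb \<beta> x < 1"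
  unfolding Tb_def by linarith

lemma Tb_iter_Suc: "(Tb \<beta> ^^ Suc k) y = Tb \<beta> ((Tb \<beta> ^^ k) y)" by simp

context
  fixes \<beta> :: real
  assumes b1: "\<beta> > 1"
begin

lemma T_iter_range: "0 \<le> y \<Longrightarrow> y < 1 \<Longrightarrow> 0 \<le> (Tb \<beta> ^^ k) y \<and> (Tb \<beta> ^^ k) y < 1"
  by (cases k) (auto simp: Tb_range simp del: funpow.simps(2) simp add: Tb_iter_Suc)

lemma greedy_real:
  assumes "0 \<le> (Tb \<beta> ^^ i) y"
  shows "real (greedy \<beta> y i) = of_int \<lfloor>\<beta> * (Tb \<beta> ^^ i) y\<rfloor>"
proof -
  have "\<beta> * (Tb \<beta> ^^ i) y \<ge> 0" using assms b1 by simp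
  then show ?thesis unfolding greedy_def by simp
qed

lemma T_step:
  assumes "0 \<le> (Tb \<beta> ^^ i) y"
  shows "(Tb \<beta> ^^ Suc i) y = \<beta> * (Tb \<beta> ^^ i) y - greedy \<beta> y i"
  using greedy_real[OF assms] by (simp add: Tb_def)

lemma greedy_le_gam:
  assumes "0 \<le> y" "y < 1"
  shows "greedy \<beta> y i \<le> gam \<beta>"
proof -
  have r: "0 \<le> (Tb \<beta> ^^ i) y" "(Tb \<beta> ^^ i) y < 1" using T_iter_range[OF assms] by auto
  then have "\<beta> * (Tb \<beta> ^^ i) y < \<beta>" using b1 by simp
  then have "real_of_int \<lfloor>\<beta> * (Tb \<beta> ^^ i) y\<rfloor> < real_of_int \<lceil>\<beta>\<rceil>"
    by (smt (verit) le_of_int_ceiling of_int_floor_le)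
  then have "\<lfloor>\<beta> * (Tb \<beta> ^^ i) y\<rfloor> \<le> \<lceil>\<beta>\<rceil> - 1" by simp
  then have "real (greedy \<beta> y i) \<le> of_int \<lceil>\<beta>\<rceil> - 1" using greedy_real[OF r(1)] by simp
  then show ?thesis using gam_real[OF b1] by simp
qed

lemma bd_greedy: "0 \<le> y \<Longrightarrow> y < 1 \<Longrightarrow> bd (greedy \<beta> y)"
  unfolding bd_def using greedy_le_gam by blast

lemma shift_greedy: "shift k (greedy \<beta> y) = greedy \<beta> ((Tb \<beta> ^^ k) y)"
  by (rule ext) (simp add: shift_apply greedy_def funpow_add)

lemma piv_greedy0:
  assumes "0 \<le> y" "y < 1"
  shows "piv \<beta> (greedy \<beta> y) = y"
proof -
  define e where "e k = piv \<beta> (shift k (greedy \<beta> y)) - (Tb \<beta> ^^ k) y" for k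
  have bg: "bd (greedy \<beta> y)" using bd_greedy[OF assms] .
  have "\<forall>k. e k = e (Suc k) / \<beta>"
  proof
    fix k
    have "(Tb \<beta> ^^ Suc k) y = \<beta> * (Tb \<beta> ^^ k) y - greedy \<beta> y k"
      using T_step T_iter_range[OF assms] by blast
    then have "(Tb \<beta> ^^ k) y = (greedy \<beta> y k + (Tb \<beta> ^^ Suc k) y) / \<beta>" using b1
      by (simp add: field_simps)
    then show "e k = e (Suc k) / \<beta>"
      unfolding e_def using piv_shift_step[OF b1 bg, of k]
      by (simp add: diff_divide_distrib add_divide_distrib)
  qed
  moreover have "\<forall>k. \<bar>e k\<bar> \<le> gam \<beta> / (\<beta> - 1) + 1"
  proof
    fix k
    have "piv \<beta> (shift k (greedy \<beta> y)) \<le> gam \<beta> / (\<beta> - 1)"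
      using piv_le[OF b1, of "shift k (greedy \<beta> y)" "gam \<beta>"] greedy_le_gam[OF assms]
      by (simp add: shift_apply)
    moreover have "0 \<le> piv \<beta> (shift k (greedy \<beta> y))" using bd_nonneg[OF b1 bd_shift[OF bg]] .
    moreover have "0 \<le> gam \<beta> / (\<beta> - 1)" using b1 by simp
    ultimately show "\<bar>e k\<bar> \<le> gam \<beta> / (\<beta> - 1) + 1" unfolding e_def
      using T_iter_range[OF assms, of k] by linarith
  qed
  ultimately have "e 0 = 0" by (rule zero_by_contraction[OF b1])
  then show ?thesis unfolding e_def by simp
qed

lemma piv_greedy:
  assumes "0 \<le> y" "y < 1"
  shows "piv \<beta> (shift k (greedy \<beta> y)) = (Tb \<beta> ^^ k) y"
  using piv_greedy0[of "(Tb \<beta> ^^ k) y"] T_iter_range[OF assms, of k] shift_greedy by simp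

lemma parry_conv:
  assumes bw: "bd w" and lt: "\<forall>i. piv \<beta> (shift i w) < 1"
  shows "(Tb \<beta> ^^ i) (piv \<beta> w) = piv \<beta> (shift i w)" "greedy \<beta> (piv \<beta> w) = w"
proof -
  have nn: "0 \<le> piv \<beta> (shift i w)" for i using bd_nonneg[OF b1 bd_shift[OF bw]] .
  have fl: "\<lfloor>\<beta> * piv \<beta> (shift i w)\<rfloor> = int (w i)" for i
  proof -
    have "\<beta> * piv \<beta> (shift i w) = w i + piv \<beta> (shift (Suc i) w)"
      using piv_shift_step[OF b1 bw, of i] b1 by (simp add: field_simps)
    then show ?thesis using nn[of "Suc i"] lt by (simp add: floor_eq_iff)
  qed
  show it: "(Tb \<beta> ^^ i) (piv \<beta> w) = piv \<beta> (shift i w)" for i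
  proof (induction i)
    case 0 then show ?case by simp
  next
    case (Suc i)
    have "\<beta> * piv \<beta> (shift i w) = w i + piv \<beta> (shift (Suc i) w)"
      using piv_shift_step[OF b1 bw, of i] b1 by (simp add: field_simps)
    then show ?case using Suc fl[of i] by (simp add: Tb_def)
  qed
  show "greedy \<beta> (piv \<beta> w) = w"
    by (rule ext) (simp add: greedy_def it fl)
qed

lemma greedy_zero: "greedy \<beta> 0 = (\<lambda>_. 0)"
proof -
  have "(Tb \<beta> ^^ i) 0 = 0" for i by (induction i) (auto simp: Tb_def)
  then show ?thesis unfolding greedy_def by auto
qed

lemma greedy_mono:
  assumes "0 \<le> y" "y \<le> y'" "y' < 1"
  shows "lex_le (greedy \<beta> y) (greedy \<beta> y')"
proof (cases "greedy \<beta> y = greedy \<beta> y'")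
  case True then show ?thesis by (simp add: lex_le_def)
next
  case False
  then obtain n where n: "\<forall>i<n. greedy \<beta> y i = greedy \<beta> y' i" "greedy \<beta> y n \<noteq> greedy \<beta> y' n"
    by (rule first_diff)
  have y0: "0 \<le> y'" using assms by simp
  have "piv \<beta> (greedy \<beta> y') - piv \<beta> (greedy \<beta> y) =
     (piv \<beta> (shift n (greedy \<beta> y')) - piv \<beta> (shift n (greedy \<beta> y))) / \<beta> ^ n"
    using piv_diff[OF b1 bd_greedy[of y'] bd_greedy[of y], of n] n(1) assms by simp
  then have "y' - y = ((Tb \<beta> ^^ n) y' - (Tb \<beta> ^^ n) y) / \<beta> ^ n"
    using piv_greedy[of y] piv_greedy[of y'] piv_greedy0[of y] piv_greedy0[of y'] assms by simp
  then have "(Tb \<beta> ^^ n) y \<le> (Tb \<beta> ^^ n) y'" using assms b1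
    by (smt (verit) divide_nonpos_pos zero_less_power)
  then have "\<beta> * (Tb \<beta> ^^ n) y \<le> \<beta> * (Tb \<beta> ^^ n) y'" using b1 by simp
  then have "greedy \<beta> y n \<le> greedy \<beta> y' n" unfolding greedy_def
    by (intro nat_mono floor_mono)
  then have "greedy \<beta> y n < greedy \<beta> y' n" using n(2) by simp
  then show ?thesis using n(1) unfolding lex_le_def lex_less_def by blast
qed

lemma greedy_less_imp:
  assumes "0 \<le> y" "y < 1" "0 \<le> y'" "y' < 1" "lex_less (greedy \<beta> y) (greedy \<beta> y')"
  shows "y < y'"
proof (rule ccontr)
  assume "\<not> y < y'"
  then have "lex_le (greedy \<beta> y') (greedy \<beta> y)" using greedy_mono assms by simp
  then show False using assms(5) lex_not_less by blast
qed

lemma greedy_strict: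
  assumes "0 \<le> y" "y < y'" "y' < 1"
  shows "lex_less (greedy \<beta> y) (greedy \<beta> y')"
proof -
  have "lex_le (greedy \<beta> y) (greedy \<beta> y')" using greedy_mono assms by simp
  moreover have "greedy \<beta> y \<noteq> greedy \<beta> y'"
    using piv_greedy0[of y] piv_greedy0[of y'] assms by force
  ultimately show ?thesis unfolding lex_le_def by blast
qed

lemma greedy_less_alpha:
  assumes "0 \<le> y" "y < 1"
  shows "lex_less (greedy \<beta> y) (alpha \<beta>)"
proof (rule ccontr)
  assume "\<not> ?thesis"
  then have "lex_le (alpha \<beta>) (greedy \<beta> y)" using lex_not_less by blast
  then consider "alpha \<beta> = greedy \<beta> y" | "lex_less (alpha \<beta>) (greedy \<beta> y)" unfolding lex_le_def by blast
  then show False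
  proof cases
    case 1 then show False using piv_alpha[OF b1] piv_greedy0[OF assms] assms by simp
  next
    case 2
    then obtain n where n: "\<forall>i<n. alpha \<beta> i = greedy \<beta> y i" "alpha \<beta> n < greedy \<beta> y n"
      unfolding lex_less_def by blast
    have bg: "bd (greedy \<beta> y)" using bd_greedy[OF assms] .
    have "piv \<beta> (greedy \<beta> y) - piv \<beta> (alpha \<beta>) =
       (piv \<beta> (shift n (greedy \<beta> y)) - piv \<beta> (shift n (alpha \<beta>))) / \<beta> ^ n"
      using piv_diff[OF b1 bg bd_alpha[OF b1], of n] n(1) by simp
    moreover have "piv \<beta> (shift n (greedy \<beta> y)) = (greedy \<beta> y n + piv \<beta> (shift (Suc n) (greedy \<beta> y))) / \<beta>"
      using piv_shift_step[OF b1 bg] .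
    moreover have "piv \<beta> (shift n (alpha \<beta>)) = (alpha \<beta> n + piv \<beta> (shift (Suc n) (alpha \<beta>))) / \<beta>"
      using piv_shift_step[OF b1 bd_alpha[OF b1]] .
    moreover have "0 \<le> piv \<beta> (shift (Suc n) (greedy \<beta> y))" using bd_nonneg[OF b1 bd_shift[OF bg]] .
    moreover have "piv \<beta> (shift (Suc n) (alpha \<beta>)) \<le> 1" using piv_alpha_shift[OF b1] by blast
    moreover have "real (alpha \<beta> n) + 1 \<le> real (greedy \<beta> y n)" using n(2) by simp
    ultimately have "piv \<beta> (greedy \<beta> y) - piv \<beta> (alpha \<beta>) \<ge> 0" using b1
      by (simp add: divide_right_mono)
    then show False using piv_alpha[OF b1] piv_greedy0[OF assms] assms by simp
  qed
qed

lemma greedy_adm: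
  assumes "0 \<le> y" "y < 1"
  shows "lex_less (shift k (greedy \<beta> y)) (alpha \<beta>)"
  using greedy_less_alpha[of "(Tb \<beta> ^^ k) y"] T_iter_range[OF assms] shift_greedy by simp

end



context
  fixes \<beta> :: real
  assumes b1: "\<beta> > 1"
begin

lemma VC1:
  assumes y: "0 \<le> y" "y < 1" and bV: "bd V" and lt: "lex_less (greedy \<beta> y) V"
  shows "y < piv \<beta> V"
proof -
  let ?W = "greedy \<beta> y"
  obtain d where d: "\<forall>i<d. ?W i = V i" "?W d < V d" using lt unfolding lex_less_def by blast
  have bW: "bd ?W" using bd_greedy[OF b1 y] .
  have "piv \<beta> V - piv \<beta> ?W = (piv \<beta> (shift d V) - piv \<beta> (shift d ?W)) / \<beta> ^ d"
    using piv_diff[OF b1 bV bW, of d] d(1) by simp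
  moreover have "piv \<beta> (shift d V) = (V d + piv \<beta> (shift (Suc d) V)) / \<beta>"
    using piv_shift_step[OF b1 bV] .
  moreover have "piv \<beta> (shift d ?W) = (?W d + piv \<beta> (shift (Suc d) ?W)) / \<beta>"
    using piv_shift_step[OF b1 bW] .
  moreover have "0 \<le> piv \<beta> (shift (Suc d) V)" using bd_nonneg[OF b1 bd_shift[OF bV]] .
  moreover have "piv \<beta> (shift (Suc d) ?W) < 1"
    using piv_greedy[OF b1 y, of "Suc d"] T_iter_range[OF b1 y, of "Suc d"] by linarith
  moreover have "real (?W d) + 1 \<le> real (V d)" using d(2) by simp
  ultimately have "piv \<beta> V - piv \<beta> ?W > 0" using b1
    by (simp add: divide_strict_right_mono)
  then show ?thesis using piv_greedy0[OF b1 y] by simp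
qed

lemma VC2:
  assumes bV: "bd V" and bW: "bd W" and le1: "\<forall>k. piv \<beta> (shift k V) \<le> 1" and le: "lex_le V W"
  shows "piv \<beta> V \<le> piv \<beta> W"
proof (cases "V = W")
  case True then show ?thesis by simp
next
  case False
  then have lt: "lex_less V W" using le unfolding lex_le_def by simp
  obtain d where d: "\<forall>i<d. V i = W i" "V d < W d" using lt unfolding lex_less_def by blast
  have "piv \<beta> W - piv \<beta> V = (piv \<beta> (shift d W) - piv \<beta> (shift d V)) / \<beta> ^ d"
    using piv_diff[OF b1 bW bV, of d] d(1) by simp
  moreover have "piv \<beta> (shift d V) = (V d + piv \<beta> (shift (Suc d) V)) / \<beta>"
    using piv_shift_step[OF b1 bV] .
  moreover have "piv \<beta> (shift d W) = (W d + piv \<beta> (shift (Suc d) W)) / \<beta>"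
    using piv_shift_step[OF b1 bW] .
  moreover have "0 \<le> piv \<beta> (shift (Suc d) W)" using bd_nonneg[OF b1 bd_shift[OF bW]] .
  moreover have "piv \<beta> (shift (Suc d) V) \<le> 1" using le1 by blast
  moreover have "real (V d) + 1 \<le> real (W d)" using d(2) by simp
  ultimately have "piv \<beta> W - piv \<beta> V \<ge> 0" using b1
    by (simp add: divide_right_mono)
  then show ?thesis by simp
qed

lemma SigmaB_bd: "V \<in> SigmaB \<beta> \<Longrightarrow> bd V"
  unfolding SigmaB_def bd_def by blast

lemma SigmaB_le1:
  assumes V: "V \<in> SigmaB \<beta>"
  shows "piv \<beta> (shift k V) \<le> 1"
proof -
  have bV: "bd V" using SigmaB_bd[OF V] .
  have dig: "\<forall>i. V i \<le> gam \<beta>" and adm: "\<forall>k. lex_less (shift k V) (alpha \<beta>)"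
    using V unfolding SigmaB_def by auto
  define f where "f k = piv \<beta> (shift k V)" for k
  have fb: "f k \<le> gam \<beta> / (\<beta> - 1)" for k
    unfolding f_def using piv_le[OF b1, of "shift k V" "gam \<beta>"] dig by (simp add: shift_apply)
  have bda: "bdd_above (range f)" using fb by (intro bdd_aboveI) auto
  define S where "S = (SUP k. f k)"
  have fS: "f k \<le> S" for k unfolding S_def using bda by (intro cSUP_upper) auto
  have key: "f k \<le> 1 + max 0 ((S - 1) / \<beta>)" for k
  proof -
    obtain n where n: "\<forall>i<n. shift k V i = alpha \<beta> i" "shift k V n < alpha \<beta> n"
      using adm unfolding lex_less_def by blast
    have bs: "bd (shift k V)" using bd_shift[OF bV] .
    have e1: "f k - 1 =
       (piv \<beta> (shift n (shift k V)) - piv \<beta> (shift n (alpha \<beta>))) / \<beta> ^ n"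
      using piv_diff[OF b1 bs bd_alpha[OF b1], of n] n(1) piv_alpha[OF b1] unfolding f_def by simp
    have s1: "piv \<beta> (shift n (shift k V)) = (V (n + k) + f (Suc (n + k))) / \<beta>"
      using piv_shift_step[OF b1 bV, of "n+k"] unfolding f_def by (simp add: shift_shift)
    have s2: "piv \<beta> (shift n (alpha \<beta>)) = (alpha \<beta> n + piv \<beta> (shift (Suc n) (alpha \<beta>))) / \<beta>"
      using piv_shift_step[OF b1 bd_alpha[OF b1]] .
    have p0: "0 \<le> piv \<beta> (shift (Suc n) (alpha \<beta>))" using bd_nonneg[OF b1 bd_shift[OF bd_alpha[OF b1]]] .
    have vl: "real (V (n + k)) + 1 \<le> real (alpha \<beta> n)" using n(2) by (simp add: shift_apply)
    have "(V (n + k) + f (Suc (n + k))) - (alpha \<beta> n + piv \<beta> (shift (Suc n) (alpha \<beta>))) \<le> S - 1"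
      using p0 vl fS[of "Suc (n+k)"] by linarith
    then have "((V (n + k) + f (Suc (n + k))) - (alpha \<beta> n + piv \<beta> (shift (Suc n) (alpha \<beta>)))) / \<beta> \<le> (S - 1) / \<beta>"
      using b1 by (intro divide_right_mono) auto
    then have "piv \<beta> (shift n (shift k V)) - piv \<beta> (shift n (alpha \<beta>)) \<le> (S - 1) / \<beta>"
      unfolding s1 s2 by (simp add: diff_divide_distrib)
    then have "f k - 1 \<le> ((S - 1) / \<beta>) / \<beta> ^ n"
      unfolding e1 using b1 by (intro divide_right_mono) auto
    moreover have "((S - 1) / \<beta>) / \<beta> ^ n \<le> max 0 ((S - 1) / \<beta>)"
    proof (cases "(S - 1) / \<beta> \<ge> 0")
      case True
      have "1 \<le> \<beta> ^ n" using b1 by simp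
      then have "((S - 1) / \<beta>) / \<beta> ^ n \<le> ((S - 1) / \<beta>) / 1" using True
        by (intro divide_left_mono) auto
      then have "((S - 1) / \<beta>) / \<beta> ^ n \<le> (S - 1) / \<beta>" by simp
      then show ?thesis by simp
    next
      case False
      then have "(S - 1) / \<beta> \<le> 0" by simp
      moreover have "0 < \<beta> ^ n" using b1 by simp
      ultimately have "((S - 1) / \<beta>) / \<beta> ^ n \<le> 0" using divide_nonpos_pos by blast
      then show ?thesis by simp
    qed
    ultimately show ?thesis by simp
  qed
  have "(SUP k. f k) \<le> 1 + max 0 ((S - 1) / \<beta>)" using key by (intro cSUP_least) auto
  then have "S \<le> 1 + max 0 ((S - 1) / \<beta>)" by (simp only: S_def[symmetric])
  then have "S \<le> 1"
  proof (cases "S \<le> 1")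
    case False
    then have "(S - 1) / \<beta> \<ge> 0" using b1 by simp
    moreover have "(S - 1) / \<beta> < S - 1" using False b1 by (simp add: divide_less_eq)
    ultimately show ?thesis using \<open>S \<le> 1 + max 0 ((S - 1) / \<beta>)\<close> by simp
  qed
  then show ?thesis using fS[of k] unfolding f_def by simp
qed

end



lemma rlen_unique:
  assumes "m > 0" "greedy \<beta> r (m - 1) \<noteq> 0" "\<forall>i\<ge>m. greedy \<beta> r i = 0"
  shows "rlen \<beta> r = m"
  unfolding rlen_def
proof (rule the_equality)
  show "m > 0 \<and> greedy \<beta> r (m - 1) \<noteq> 0 \<and> (\<forall>i\<ge>m. greedy \<beta> r i = 0)" using assms by blast
  fix m' assume h: "m' > 0 \<and> greedy \<beta> r (m' - 1) \<noteq> 0 \<and> (\<forall>i\<ge>m'. greedy \<beta> r i = 0)"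
  show "m' = m"
  proof (rule ccontr)
    assume "m' \<noteq> m"
    then consider "m' < m" | "m < m'" by linarith
    then show False
    proof cases
      case 1
      then have "m - 1 \<ge> m'" by simp
      then have "greedy \<beta> r (m - 1) = 0" using h by simp
      then show False using assms(2) by simp
    next
      case 2
      then have "m' - 1 \<ge> m" by simp
      then have "greedy \<beta> r (m' - 1) = 0" using assms(3) by simp
      then show False using h by simp
    qed
  qed
qed

lemma rlen_props:
  assumes "beta_rational \<beta> r"
  shows "rlen \<beta> r > 0" "greedy \<beta> r (rlen \<beta> r - 1) \<noteq> 0" "\<forall>i\<ge>rlen \<beta> r. greedy \<beta> r i = 0"
proof -
  obtain m where "m > 0" "greedy \<beta> r (m - 1) \<noteq> 0" "\<forall>i\<ge>m. greedy \<beta> r i = 0"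
    using assms unfolding beta_rational_def by blast
  moreover have "rlen \<beta> r = m" using calculation by (intro rlen_unique) auto
  ultimately show "rlen \<beta> r > 0" "greedy \<beta> r (rlen \<beta> r - 1) \<noteq> 0" "\<forall>i\<ge>rlen \<beta> r. greedy \<beta> r i = 0"
    by simp_all
qed

lemma rper_apply: "rper \<beta> r i = greedy \<beta> r (i mod rlen \<beta> r)"
  by (simp add: rper_def)

context
  fixes \<beta> :: real
  assumes b1: "\<beta> > 1"
begin

lemma bd_rper: "0 \<le> r \<Longrightarrow> r < 1 \<Longrightarrow> bd (rper \<beta> r)"
  unfolding bd_def rper_apply by (rule exI[of _ "gam \<beta>"]) (simp add: greedy_le_gam[OF b1])

lemma lemD:
  assumes br: "beta_rational \<beta> r" and y: "r < y" "y < 1"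
    and av: "\<forall>k. (Tb \<beta> ^^ k) y \<notin> {0<..r}"
  shows "lex_le (rper \<beta> r) (greedy \<beta> y)"
proof (rule ccontr)
  define m where "m = rlen \<beta> r"
  let ?W = "greedy \<beta> y"
  have m0: "m > 0" and gz: "\<forall>i\<ge>m. greedy \<beta> r i = 0" using rlen_props[OF br] unfolding m_def by auto
  have r01: "0 < r" "r < 1" using br unfolding beta_rational_def by auto
  have y0: "0 \<le> y" using y r01 by simp
  assume "\<not> lex_le (rper \<beta> r) ?W"
  then have "lex_less ?W (rper \<beta> r)" using lex_not_less by blast
  then obtain d where d: "\<forall>i<d. ?W i = rper \<beta> r i" "?W d < rper \<beta> r d" unfolding lex_less_def by blast
  define k where "k = (d div m) * m"
  have kd: "k + d mod m = d" unfolding k_def by simp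
  have dm: "d mod m < m" using m0 by simp
  have modk: "(i + k) mod m = i" if "i < m" for i unfolding k_def using that by simp
  have lt: "lex_less (shift k ?W) (greedy \<beta> r)"
  proof (rule lex_lessI[of "d mod m"])
    show "\<forall>i<d mod m. shift k ?W i = greedy \<beta> r i"
    proof (intro allI impI)
      fix i assume i: "i < d mod m"
      then have "i + k < d" using kd by linarith
      then have "?W (i + k) = rper \<beta> r (i + k)" using d(1) by blast
      also have "\<dots> = greedy \<beta> r i" unfolding rper_apply m_def[symmetric] using modk[of i] i dm by simp
      finally show "shift k ?W i = greedy \<beta> r i" by (simp add: shift_apply)
    qed
    have "rper \<beta> r d = greedy \<beta> r (d mod m)" unfolding rper_apply m_def ..
    then show "shift k ?W (d mod m) < greedy \<beta> r (d mod m)" using d(2) kd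
      by (simp add: shift_apply add.commute)
  qed
  have Tk: "0 \<le> (Tb \<beta> ^^ k) y" "(Tb \<beta> ^^ k) y < 1" using T_iter_range[OF b1 y0 y(2)] by auto
  have "(Tb \<beta> ^^ k) y < r"
    using greedy_less_imp[OF b1 Tk _ r01(2)] lt shift_greedy[OF b1] r01 by simp
  moreover have "\<not> (0 < (Tb \<beta> ^^ k) y \<and> (Tb \<beta> ^^ k) y \<le> r)" using av[rule_format, of k] by simp
  ultimately have T0: "(Tb \<beta> ^^ k) y = 0" using Tk by linarith
  have Wz: "?W i = 0" if "i \<ge> k" for i
  proof -
    have "shift k ?W = (\<lambda>_. 0)" using shift_greedy[OF b1, of k y] T0 greedy_zero[OF b1] by simp
    then have "shift k ?W (i - k) = 0" by simp
    then show ?thesis using that by (simp add: shift_apply)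
  qed
  show False
  proof (cases "k = 0")
    case True
    then have "?W = (\<lambda>_. 0)" using Wz by auto
    then have "y = 0" using piv_greedy0[OF b1 y0 y(2)] piv_zero[OF b1] by simp
    then show False using y r01 by simp
  next
    case False
    then have "d div m \<ge> 1" unfolding k_def by simp
    then have km: "k \<ge> m" unfolding k_def using mult_le_mono1[of 1 "d div m" m] by simp
    have "shift (k - m) ?W = greedy \<beta> r"
    proof (rule ext)
      fix i
      show "shift (k - m) ?W i = greedy \<beta> r i"
      proof (cases "i < m")
        case True
        then have "i + (k - m) < d" using km kd by linarith
        then have "?W (i + (k - m)) = rper \<beta> r (i + (k - m))" using d(1) by blast
        also have "\<dots> = greedy \<beta> r ((i + (k - m)) mod m)" unfolding rper_apply m_def ..
        also have "(i + (k - m)) mod m = i"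
        proof -
          have "k - m = (d div m - 1) * m" unfolding k_def by (simp add: diff_mult_distrib)
          then show ?thesis using True by simp
        qed
        finally show ?thesis by (simp add: shift_apply)
      next
        case False
        then show ?thesis using Wz[of "i + (k - m)"] gz km by (simp add: shift_apply)
      qed
    qed
    then have "(Tb \<beta> ^^ (k - m)) y = r"
      using piv_greedy[OF b1 y0 y(2), of "k - m"] piv_greedy0[OF b1, of r] r01 by simp
    then show False using av r01 by (metis greaterThanAtMost_iff order_refl)
  qed
qed

lemma zero_less_alpha: "lex_less (\<lambda>_. 0) (alpha \<beta>)"
proof -
  have ex: "\<exists>i. alpha \<beta> i \<noteq> 0" using alpha_nz[OF b1, of 0] by blast
  define e where "e = (LEAST i. alpha \<beta> i \<noteq> 0)"
  have "alpha \<beta> e \<noteq> 0" unfolding e_def by (rule LeastI_ex[OF ex])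
  moreover have "\<forall>i<e. alpha \<beta> i = 0" unfolding e_def using not_less_Least by blast
  ultimately show ?thesis by (intro lex_lessI[of e]) auto
qed

lemma notSigma_ex:
  assumes "x \<notin> SigmaB \<beta>"
  shows "\<exists>k. lex_le (alpha \<beta>) (shift k x)"
proof -
  have "\<not>(\<forall>i. x i \<le> gam \<beta>) \<or> \<not>(\<forall>k. lex_less (shift k x) (alpha \<beta>))"
    using assms unfolding SigmaB_def by blast
  then consider i where "x i > gam \<beta>" | k where "\<not> lex_less (shift k x) (alpha \<beta>)"
    by (auto simp: not_le)
  then show ?thesis
  proof cases
    case 1
    then have "lex_less (alpha \<beta>) (shift i x)"
      using alpha_0[OF b1] by (intro lex_lessI[of 0]) (auto simp: shift_apply)
    then show ?thesis unfolding lex_le_def by blast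
  next
    case 2 then show ?thesis using lex_not_less by blast
  qed
qed

definition adm :: "(nat \<Rightarrow> nat) \<Rightarrow> bool" where
  "adm W = (\<forall>k. lex_less (shift k W) (alpha \<beta>))"

lemma rstep_unf:
  "rstep \<beta> x = (\<lambda>i. if i < (LEAST k. lex_le (alpha \<beta>) (shift k x)) - 1 then x i
      else if i = (LEAST k. lex_le (alpha \<beta>) (shift k x)) - 1 then x i + 1 else 0)"
  unfolding rstep_def Let_def ..

lemma rstep_gt: "lex_less x (rstep \<beta> x)"
  unfolding rstep_unf by (rule lex_lessI[of "(LEAST k. lex_le (alpha \<beta>) (shift k x)) - 1"]) auto

lemma J_pos:
  assumes "adm W" "lex_le x W" "lex_le (alpha \<beta>) (shift j x)"
  shows "j \<noteq> 0"
proof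
  assume "j = 0"
  then have "lex_le (alpha \<beta>) W" using assms(2,3) lex_le_trans[of "alpha \<beta>" x W] by simp
  moreover have "lex_less W (alpha \<beta>)" using assms(1) unfolding adm_def by (metis shift_0)
  ultimately show False using lex_not_less by blast
qed

lemma rstep_ge:
  assumes aW: "adm W" and ex: "\<exists>k. lex_le (alpha \<beta>) (shift k x)" and le: "lex_le x W"
  shows "lex_le (rstep \<beta> x) W"
proof -
  define j where "j = (LEAST k. lex_le (alpha \<beta>) (shift k x))"
  have hj: "lex_le (alpha \<beta>) (shift j x)" unfolding j_def by (rule LeastI_ex[OF ex])
  have j0: "j \<noteq> 0" using J_pos[OF aW le hj] .
  have xW: "x \<noteq> W"
  proof
    assume "x = W"
    then have "lex_le (alpha \<beta>) (shift j W)" using hj by simp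
    then show False using aW unfolding adm_def using lex_not_less by blast
  qed
  then have "lex_less x W" using le unfolding lex_le_def by simp
  then obtain d where d: "\<forall>i<d. x i = W i" "x d < W d" unfolding lex_less_def by blast
  have dj: "d < j"
  proof (rule ccontr)
    assume "\<not> d < j"
    then have "lex_less (shift j x) (shift j W)"
      using d by (intro lex_lessI[of "d - j"]) (auto simp: shift_apply)
    then have "lex_less (alpha \<beta>) (shift j W)" using hj lex_le_less_trans by blast
    then show False using aW unfolding adm_def using lex_less_asym by blast
  qed
  have rs: "rstep \<beta> x = (\<lambda>i. if i < j - 1 then x i else if i = j - 1 then x i + 1 else 0)"
    unfolding rstep_unf j_def ..
  show ?thesis
  proof (cases "d < j - 1")
    case True
    have "lex_less (rstep \<beta> x) W" unfolding rs using d True by (intro lex_lessI[of d]) simp_all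
    then show ?thesis unfolding lex_le_def by blast
  next
    case False
    then have dd: "d = j - 1" using dj by simp
    show ?thesis
    proof (cases "W d > x d + 1")
      case True
      have "lex_less (rstep \<beta> x) W" unfolding rs using d True dd by (intro lex_lessI[of d]) simp_all
      then show ?thesis unfolding lex_le_def by blast
    next
      case False
      then have Wd: "W d = x d + 1" using d(2) by simp
      have agree: "\<forall>i\<le>d. rstep \<beta> x i = W i"
      proof (intro allI impI)
        fix i assume "i \<le> d"
        then consider "i < d" | "i = d" by linarith
        then show "rstep \<beta> x i = W i"
        proof cases
          case 1 then show ?thesis unfolding rs using d(1) dd by simp
        next
          case 2 then show ?thesis unfolding rs using Wd dd by simp
        qed
      qed
      have zero: "\<forall>i>d. rstep \<beta> x i = 0" unfolding rs using dd by simp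
      show ?thesis
      proof (cases "rstep \<beta> x = W")
        case True then show ?thesis by (simp add: lex_le_def)
      next
        case False
        then obtain e where e: "\<forall>i<e. rstep \<beta> x i = W i" "rstep \<beta> x e \<noteq> W e" by (rule first_diff)
        have "\<not> e \<le> d" using agree e(2) by blast
        then have "e > d" by simp
        then have "rstep \<beta> x e < W e" using zero e(2) by simp
        then show ?thesis using e(1) unfolding lex_le_def lex_less_def by blast
      qed
    qed
  qed
qed

lemma iter_ge:
  assumes aW: "adm W" and le0: "lex_le x0 W" and ns: "\<forall>n'<n. (rstep \<beta> ^^ n') x0 \<notin> SigmaB \<beta>"
  shows "lex_le ((rstep \<beta> ^^ n) x0) W"
  using ns
proof (induction n)
  case 0 then show ?case using le0 by simp
next
  case (Suc n)
  then have ih: "lex_le ((rstep \<beta> ^^ n) x0) W" by simp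
  have "(rstep \<beta> ^^ n) x0 \<notin> SigmaB \<beta>" using Suc.prems by simp
  then have "\<exists>k. lex_le (alpha \<beta>) (shift k ((rstep \<beta> ^^ n) x0))" by (rule notSigma_ex)
  then show ?case using rstep_ge[OF aW _ ih] by simp
qed

lemma terminates:
  assumes aW: "adm W" and le0: "lex_le x0 W"
  shows "\<exists>n. (rstep \<beta> ^^ n) x0 \<in> SigmaB \<beta>"
proof (rule ccontr)
  assume "\<not> ?thesis"
  then have none: "\<forall>n. (rstep \<beta> ^^ n) x0 \<notin> SigmaB \<beta>" by blast
  define X where "X n = (rstep \<beta> ^^ n) x0" for n
  define J where "J n = (LEAST k. lex_le (alpha \<beta>) (shift k (X n)))" for n
  have exJ: "\<exists>k. lex_le (alpha \<beta>) (shift k (X n))" for n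
    using notSigma_ex none unfolding X_def by blast
  have hJ: "lex_le (alpha \<beta>) (shift (J n) (X n))" for n
    unfolding J_def by (rule LeastI_ex[OF exJ])
  have XW: "lex_le (X n) W" for n unfolding X_def using iter_ge[OF aW le0] none by blast
  have J0: "J n \<noteq> 0" for n using J_pos[OF aW XW hJ] .
  have XS: "X (Suc n) = rstep \<beta> (X n)" for n unfolding X_def by simp
  have Xz: "X (Suc n) i = 0" if "i \<ge> J n" for n i
    unfolding XS rstep_unf J_def[symmetric] using that J0[of n] by auto
  have dec: "J (Suc n) < J n" for n
  proof (rule ccontr)
    assume "\<not> J (Suc n) < J n"
    then have "shift (J (Suc n)) (X (Suc n)) = (\<lambda>_. 0)" using Xz by (auto simp: shift_apply)
    then have "lex_le (alpha \<beta>) (\<lambda>_. 0)" using hJ[of "Suc n"] by simp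
    then show False using zero_less_alpha lex_not_less by blast
  qed
  have "J n + n \<le> J 0" for n
  proof (induction n)
    case 0 then show ?case by simp
  next
    case (Suc n) then show ?case using dec[of n] by simp
  qed
  then have "J (Suc (J 0)) + Suc (J 0) \<le> J 0" by blast
  then show False by simp
qed

end



context
  fixes \<beta> :: real
  assumes b1: "\<beta> > 1"
begin

lemma gam_div: "0 \<le> real (gam \<beta>) / \<beta> \<and> real (gam \<beta>) / \<beta> < 1"
  using gam_lt[OF b1] b1 by (simp add: divide_less_eq)

lemma greedy_gam0: "greedy \<beta> (real (gam \<beta>) / \<beta>) 0 = gam \<beta>"
  using b1 by (simp add: greedy_def)

lemma br01: "beta_rational \<beta> r \<Longrightarrow> 0 < r \<and> r < 1"
  unfolding beta_rational_def by auto

lemma rstep_iter_ge: "lex_le x ((rstep \<beta> ^^ n) x)"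
proof (induction n)
  case 0 then show ?case by (simp add: lex_le_def)
next
  case (Suc n)
  have "lex_less ((rstep \<beta> ^^ n) x) ((rstep \<beta> ^^ Suc n) x)" using rstep_gt[OF b1] by simp
  then show ?case using Suc lex_le_less_trans[of x] unfolding lex_le_def by blast
qed

lemma rtilde_props:
  assumes br: "beta_rational \<beta> r" and nS: "rper \<beta> r \<notin> SigmaB \<beta>" and ng: "greedy \<beta> r 0 \<noteq> gam \<beta>"
  shows "rtilde \<beta> r \<in> SigmaB \<beta>"
    "\<And>W. adm \<beta> W \<Longrightarrow> lex_le (rper \<beta> r) W \<Longrightarrow> lex_le (rtilde \<beta> r) W"
    "lex_le (rper \<beta> r) (rtilde \<beta> r)"
proof -
  have r01: "0 < r" "r < 1" using br01[OF br] by auto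
  define W0 where "W0 = greedy \<beta> (real (gam \<beta>) / \<beta>)"
  have aW0: "adm \<beta> W0" unfolding adm_def[OF b1] W0_def using greedy_adm[OF b1] gam_div by blast
  have "greedy \<beta> r 0 \<le> gam \<beta>" using greedy_le_gam[OF b1] r01 by simp
  then have "greedy \<beta> r 0 < gam \<beta>" using ng by simp
  moreover have "rper \<beta> r 0 = greedy \<beta> r 0" by (simp add: rper_apply)
  ultimately have "lex_less (rper \<beta> r) W0" unfolding W0_def
    by (intro lex_lessI[of 0]) (simp_all add: greedy_gam0)
  then have le0: "lex_le (rper \<beta> r) W0" unfolding lex_le_def by blast
  have ex: "\<exists>n. (rstep \<beta> ^^ n) (rper \<beta> r) \<in> SigmaB \<beta>" by (rule terminates[OF b1 aW0 le0])
  define n0 where "n0 = (LEAST n. (rstep \<beta> ^^ n) (rper \<beta> r) \<in> SigmaB \<beta>)"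
  have rt: "rtilde \<beta> r = (rstep \<beta> ^^ n0) (rper \<beta> r)" unfolding rtilde_def Let_def n0_def ..
  show "rtilde \<beta> r \<in> SigmaB \<beta>" unfolding rt n0_def by (rule LeastI_ex[OF ex])
  have ns: "\<forall>n'<n0. (rstep \<beta> ^^ n') (rper \<beta> r) \<notin> SigmaB \<beta>" unfolding n0_def using not_less_Least by blast
  show "lex_le (rtilde \<beta> r) W" if "adm \<beta> W" "lex_le (rper \<beta> r) W" for W
    unfolding rt using iter_ge[OF b1 that ns] .
  show "lex_le (rper \<beta> r) (rtilde \<beta> r)" unfolding rt by (rule rstep_iter_ge)
qed

lemma rstar_le1:
  assumes br: "beta_rational \<beta> r"
  shows "rstar \<beta> r \<le> 1"
proof -
  consider (A) "rper \<beta> r \<in> SigmaB \<beta>" | (B) "rper \<beta> r \<notin> SigmaB \<beta>" "greedy \<beta> r 0 = gam \<beta>"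
    | (C) "rper \<beta> r \<notin> SigmaB \<beta>" "greedy \<beta> r 0 \<noteq> gam \<beta>" by blast
  then show ?thesis
  proof cases
    case A then show ?thesis unfolding rstar_def using SigmaB_le1[OF b1 A, of 0] by simp
  next
    case B then show ?thesis unfolding rstar_def using piv_alpha[OF b1] by simp
  next
    case C then show ?thesis unfolding rstar_def using SigmaB_le1[OF b1 rtilde_props(1)[OF br C], of 0] by simp
  qed
qed

lemma caseB:
  assumes br: "beta_rational \<beta> r" and g0: "greedy \<beta> r 0 = gam \<beta>" and y: "r < y" "y < 1"
  shows "\<exists>k. (Tb \<beta> ^^ k) y \<in> {0<..r}"
proof (rule ccontr)
  assume "\<not> ?thesis"
  then have av: "\<forall>k. (Tb \<beta> ^^ k) y \<notin> {0<..r}" by blast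
  have r01: "0 < r" "r < 1" using br01[OF br] by auto
  have bg: "bd (greedy \<beta> r)" using bd_greedy[OF b1] r01 by simp
  have "r = (greedy \<beta> r 0 + piv \<beta> (shift 1 (greedy \<beta> r))) / \<beta>"
    using piv_greedy0[OF b1, of r] piv_step[OF b1 bg] r01 by simp
  moreover have "0 \<le> piv \<beta> (shift 1 (greedy \<beta> r))" using bd_nonneg[OF b1 bd_shift[OF bg]] .
  ultimately have rg: "real (gam \<beta>) \<le> \<beta> * r" using g0 b1 by (simp add: field_simps)
  define c where "c = real (gam \<beta>) / (\<beta> - 1)"
  have c1: "1 \<le> c" unfolding c_def using gam_ge[OF b1] b1 by (simp add: le_divide_eq)
  have cb: "\<beta> * c - gam \<beta> = c" unfolding c_def using b1 by (simp add: field_simps)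
  have main: "r < (Tb \<beta> ^^ k) y \<and> (Tb \<beta> ^^ k) y < 1 \<and> c - (Tb \<beta> ^^ k) y = \<beta> ^ k * (c - y)" for k
  proof (induction k)
    case 0 then show ?case using y by simp
  next
    case (Suc k)
    define z where "z = (Tb \<beta> ^^ k) y"
    have z: "r < z" "z < 1" "c - z = \<beta> ^ k * (c - y)" using Suc unfolding z_def by auto
    have "\<beta> * z > real (gam \<beta>)" using rg z(1) b1 by (smt (verit) mult_strict_left_mono)
    moreover have "\<beta> * z < real (gam \<beta>) + 1" using z(2) b1 gam_ge[OF b1] by (smt (verit) mult_strict_left_mono mult_cancel_left1)
    ultimately have fl: "\<lfloor>\<beta> * z\<rfloor> = int (gam \<beta>)" by (simp add: floor_eq_iff)
    have Tz: "(Tb \<beta> ^^ Suc k) y = \<beta> * z - gam \<beta>" unfolding z_def by (simp add: Tb_def fl[unfolded z_def])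
    have pos: "(Tb \<beta> ^^ Suc k) y > 0" using Tz \<open>\<beta> * z > real (gam \<beta>)\<close> by simp
    have "\<not> ((Tb \<beta> ^^ Suc k) y \<le> r)" using av[rule_format, of "Suc k"] pos by auto
    moreover have "(Tb \<beta> ^^ Suc k) y < 1" using Tb_range by simp
    moreover have "c - (Tb \<beta> ^^ Suc k) y = \<beta> * (c - z)" using Tz cb by (simp add: algebra_simps)
    ultimately show ?case using z(3) by simp
  qed
  have cy: "c - y > 0" using c1 y by simp
  obtain k where k: "c / (c - y) < \<beta> ^ k" using real_arch_pow[OF b1] by blast
  then have "c < \<beta> ^ k * (c - y)" using cy by (simp add: divide_less_eq)
  moreover have "c - (Tb \<beta> ^^ k) y \<le> c" using main[of k] r01 by simp
  ultimately show False using main[of k] by simp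
qed

lemma lemG:
  assumes br: "beta_rational \<beta> r" and y: "r < y" "y < rstar \<beta> r"
  shows "\<exists>k. (Tb \<beta> ^^ k) y \<in> {0<..r}"
proof (rule ccontr)
  assume "\<not> ?thesis"
  then have av: "\<forall>k. (Tb \<beta> ^^ k) y \<notin> {0<..r}" by blast
  have r01: "0 < r" "r < 1" using br01[OF br] by auto
  have y1: "y < 1" using y rstar_le1[OF br] by simp
  have y0: "0 \<le> y" using y r01 by simp
  have D: "lex_le (rper \<beta> r) (greedy \<beta> y)" using lemD[OF b1 br y(1) y1 av] .
  have aW: "adm \<beta> (greedy \<beta> y)" unfolding adm_def[OF b1] using greedy_adm[OF b1 y0 y1] by blast
  have bW: "bd (greedy \<beta> y)" using bd_greedy[OF b1 y0 y1] .
  consider (A) "rper \<beta> r \<in> SigmaB \<beta>" | (B) "rper \<beta> r \<notin> SigmaB \<beta>" "greedy \<beta> r 0 = gam \<beta>"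
    | (C) "rper \<beta> r \<notin> SigmaB \<beta>" "greedy \<beta> r 0 \<noteq> gam \<beta>" by blast
  then show False
  proof cases
    case A
    have "piv \<beta> (rper \<beta> r) \<le> piv \<beta> (greedy \<beta> y)"
      using VC2[OF b1 SigmaB_bd[OF b1 A] bW _ D] SigmaB_le1[OF b1 A] by blast
    then have "rstar \<beta> r \<le> y" unfolding rstar_def using A piv_greedy0[OF b1 y0 y1] by simp
    then show False using y by simp
  next
    case B
    then show False using caseB[OF br B(2) y(1) y1] av by blast
  next
    case C
    have S: "rtilde \<beta> r \<in> SigmaB \<beta>" using rtilde_props(1)[OF br C] .
    have "lex_le (rtilde \<beta> r) (greedy \<beta> y)" using rtilde_props(2)[OF br C aW D] .
    then have "piv \<beta> (rtilde \<beta> r) \<le> piv \<beta> (greedy \<beta> y)"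
      using VC2[OF b1 SigmaB_bd[OF b1 S] bW] SigmaB_le1[OF b1 S] by blast
    then have "rstar \<beta> r \<le> y" unfolding rstar_def using C piv_greedy0[OF b1 y0 y1] by simp
    then show False using y by simp
  qed
qed

lemma Kset_mid: "0 < s \<Longrightarrow> s < 1 \<Longrightarrow> Kset \<beta> s = {x \<in> {0..<1}. \<forall>k. (Tb \<beta> ^^ k) x \<notin> {0<..<s}}"
  unfolding Kset_def by simp

lemma Kset_sub:
  assumes br: "beta_rational \<beta> r" and s1: "r < s1" "s1 < rstar \<beta> r" and s2: "r < s2" "s2 < rstar \<beta> r"
  shows "Kset \<beta> s1 \<subseteq> Kset \<beta> s2"
proof
  have r01: "0 < r" "r < 1" using br01[OF br] by auto
  have le1: "rstar \<beta> r \<le> 1" using rstar_le1[OF br] .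
  fix x assume "x \<in> Kset \<beta> s1"
  then have x: "x \<in> {0..<1}" "\<forall>k. (Tb \<beta> ^^ k) x \<notin> {0<..<s1}"
    using Kset_mid[of s1] s1 r01 le1 by auto
  have "\<forall>k. (Tb \<beta> ^^ k) x \<notin> {0<..<s2}"
  proof (intro allI notI)
    fix k assume k: "(Tb \<beta> ^^ k) x \<in> {0<..<s2}"
    let ?z = "(Tb \<beta> ^^ k) x"
    have "?z \<ge> s1" using x(2)[rule_format, of k] k by auto
    then have "r < ?z" "?z < rstar \<beta> r" using s1 s2 k by auto
    then obtain k' where k': "(Tb \<beta> ^^ k') ?z \<in> {0<..r}" using lemG[OF br] by blast
    have "(Tb \<beta> ^^ (k' + k)) x = (Tb \<beta> ^^ k') ?z" by (simp add: funpow_add)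
    then have "(Tb \<beta> ^^ (k' + k)) x \<in> {0<..<s1}" using k' s1 by auto
    then show False using x(2) by blast
  qed
  then show "x \<in> Kset \<beta> s2" using Kset_mid[of s2] s2 r01 le1 x(1) by auto
qed

end



lemma supset_part:
  assumes b1: "\<beta> > 1" and r: "r \<in> QB \<beta>" and t: "t \<in> Istar \<beta> r"
  shows "t \<in> {0..<1} - Ubif \<beta>"
proof -
  have br: "beta_rational \<beta> r" using r unfolding QB_def by simp
  have r01: "0 < r" "r < 1" using br01[OF b1 br] by auto
  have tr: "r < t" "t < rstar \<beta> r" using t unfolding Istar_def by auto
  have le1: "rstar \<beta> r \<le> 1" using rstar_le1[OF b1 br] .
  have t01: "0 < t" "t < 1" using tr r01 le1 by auto
  have "\<not> bifurcation \<beta> t"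
  proof
    assume bif: "bifurcation \<beta> t"
    define \<delta> where "\<delta> = min (t - r) (rstar \<beta> r - t)"
    have dpos: "\<delta> > 0" unfolding \<delta>_def using tr by simp
    have all: "\<forall>\<delta>>0. \<exists>t'\<in>{0..1}. \<bar>t' - t\<bar> < \<delta> \<and> Kset \<beta> t' \<noteq> Kset \<beta> t"
      using bif t01 unfolding bifurcation_def by auto
    obtain t' where t': "t' \<in> {0..1}" "\<bar>t' - t\<bar> < \<delta>" "Kset \<beta> t' \<noteq> Kset \<beta> t"
      using all[rule_format, OF dpos] by blast
    have "r < t'" "t' < rstar \<beta> r" using t'(2) unfolding \<delta>_def by auto
    then have "Kset \<beta> t' = Kset \<beta> t"
      using Kset_sub[OF b1 br] tr by (intro equalityI) auto
    then show False using t'(3) by simp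
  qed
  then show ?thesis unfolding Ubif_def using t01 by simp
qed

lemma subset_part:
  assumes b1: "\<beta> > 1" and t: "t \<in> {0..<1} - Ubif \<beta>"
  shows "\<exists>r\<in>QB \<beta>. t \<in> Istar \<beta> r"
proof -
  have t1: "0 \<le> t" "t < 1" and nb: "\<not> bifurcation \<beta> t" using t unfolding Ubif_def by auto
  have t0: "0 < t" using nb t1 unfolding bifurcation_def by (cases "t = 0") auto
  have "\<not> (\<forall>\<delta>>0. \<exists>t'\<in>{0..1}. \<bar>t' - t\<bar> < \<delta> \<and> Kset \<beta> t' \<noteq> Kset \<beta> t)"
    using nb t0 t1 unfolding bifurcation_def by auto
  then obtain \<delta> where dpos: "\<delta> > 0" and dK: "\<forall>t'\<in>{0..1}. \<bar>t' - t\<bar> < \<delta> \<longrightarrow> Kset \<beta> t' = Kset \<beta> t"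
    by auto
  have exn: "\<exists>n. (Tb \<beta> ^^ n) t \<in> {0<..<t}"
  proof (rule ccontr)
    assume "\<not> ?thesis"
    then have tK: "t \<in> Kset \<beta> t" using Kset_mid[OF b1, of t] t0 t1 by auto
    define t' where "t' = min (t + \<delta> / 2) 1"
    have t'r: "t' \<in> {0..1}" "\<bar>t' - t\<bar> < \<delta>" "t < t'" unfolding t'_def using t0 t1 dpos by auto
    have "t \<notin> Kset \<beta> t'"
    proof (cases "t' = 1")
      case True then show ?thesis unfolding Kset_def using t0 by simp
    next
      case False
      then have "t' < 1" using t'r by simp
      then have "Kset \<beta> t' = {x \<in> {0..<1}. \<forall>k. (Tb \<beta> ^^ k) x \<notin> {0<..<t'}}"
        using Kset_mid[OF b1, of t'] t'r t0 by simp
      then show ?thesis using t0 t'r(3) by (auto intro: exI[of _ 0])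
    qed
    then show False using tK dK t'r by blast
  qed
  define n where "n = (LEAST n. (Tb \<beta> ^^ n) t \<in> {0<..<t})"
  have hn: "(Tb \<beta> ^^ n) t \<in> {0<..<t}" unfolding n_def by (rule LeastI_ex[OF exn])
  have mn: "\<forall>n'<n. (Tb \<beta> ^^ n') t \<notin> {0<..<t}" unfolding n_def using not_less_Least by blast
  have n0: "n \<noteq> 0" using hn by (cases n) auto
  have Tr: "0 \<le> (Tb \<beta> ^^ k) t \<and> (Tb \<beta> ^^ k) t < 1" for k using T_iter_range[OF b1 t1] .
  have gn: "greedy \<beta> t (n - 1) \<noteq> 0"
  proof
    assume g: "greedy \<beta> t (n - 1) = 0"
    have "(Tb \<beta> ^^ Suc (n - 1)) t = \<beta> * (Tb \<beta> ^^ (n - 1)) t - greedy \<beta> t (n - 1)"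
      using T_step[OF b1] Tr by blast
    then have "(Tb \<beta> ^^ n) t = \<beta> * (Tb \<beta> ^^ (n - 1)) t" using g n0 by simp
    then have "(Tb \<beta> ^^ (n - 1)) t \<in> {0<..<t}" using hn b1 Tr[of "n-1"]
      by (auto simp: zero_less_mult_iff) (smt (verit) mult_le_cancel_right1 mult.commute)
    moreover have "n - 1 < n" using n0 by simp
    ultimately show False using mn by blast
  qed
  let ?W = "greedy \<beta> t"
  have bW: "bd ?W" using bd_greedy[OF b1 t1] .
  define v where "v i = (if i < n then ?W i else 0)" for i
  have vle: "v i \<le> ?W i" for i unfolding v_def by simp
  have bv: "bd v" using bW vle unfolding bd_def by (meson order_trans)
  have vlt: "\<forall>i. piv \<beta> (shift i v) < 1"
  proof
    fix i
    have "piv \<beta> (shift i v) \<le> piv \<beta> (shift i ?W)"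
      using piv_mono[OF b1 bd_shift[OF bW]] vle by (simp add: shift_apply)
    also have "\<dots> = (Tb \<beta> ^^ i) t" using piv_greedy[OF b1 t1] .
    finally show "piv \<beta> (shift i v) < 1" using Tr[of i] by simp
  qed
  define r where "r = piv \<beta> v"
  have gr: "greedy \<beta> r = v" unfolding r_def using parry_conv(2)[OF b1 bv vlt] .
  have rpos: "0 < r" unfolding r_def using piv_pos[OF b1 bv, of "n - 1"] gn n0 unfolding v_def by simp
  have r1: "r < 1" unfolding r_def using vlt[rule_format, of 0] by simp
  have rl: "rlen \<beta> r = n" using n0 gn by (intro rlen_unique) (auto simp: gr v_def)
  have br: "beta_rational \<beta> r" unfolding beta_rational_def using rpos r1 n0 gn
    by (intro conjI exI[of _ n]) (auto simp: gr v_def)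
  then have rQ: "r \<in> QB \<beta>" unfolding QB_def by simp
  have rp: "rper \<beta> r i = ?W (i mod n)" for i
    unfolding rper_apply rl gr v_def using n0 by simp
  have "t - r = ((Tb \<beta> ^^ n) t - 0) / \<beta> ^ n"
  proof -
    have "piv \<beta> ?W - piv \<beta> v = (piv \<beta> (shift n ?W) - piv \<beta> (shift n v)) / \<beta> ^ n"
      using piv_diff[OF b1 bW bv, of n] unfolding v_def by simp
    moreover have "shift n v = (\<lambda>_. 0)" unfolding v_def by (auto simp: shift_apply)
    ultimately show ?thesis using piv_greedy0[OF b1 t1] piv_greedy[OF b1 t1, of n] piv_zero[OF b1]
      unfolding r_def by simp
  qed
  moreover have "(Tb \<beta> ^^ n) t / \<beta> ^ n > 0" using hn b1 by simp
  ultimately have rt: "r < t" by simp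
  have Wlt: "lex_less ?W (rper \<beta> r)"
  proof -
    have ne: "?W \<noteq> rper \<beta> r"
    proof
      assume e: "?W = rper \<beta> r"
      have "shift n (rper \<beta> r) = rper \<beta> r" by (rule ext) (simp add: shift_apply rp)
      then have "shift n ?W = ?W" using e by simp
      then have "(Tb \<beta> ^^ n) t = t" using piv_greedy[OF b1 t1, of n] piv_greedy0[OF b1 t1] by simp
      then show False using hn by simp
    qed
    have "\<not> lex_less (rper \<beta> r) ?W"
    proof
      assume "lex_less (rper \<beta> r) ?W"
      then obtain d where d: "\<forall>i<d. rper \<beta> r i = ?W i" "rper \<beta> r d < ?W d" unfolding lex_less_def by blast
      have dn: "n \<le> d"
      proof (rule ccontr)
        assume "\<not> n \<le> d"
        then have "rper \<beta> r d = ?W d" using rp by simp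
        then show False using d(2) by simp
      qed
      have "lex_less ?W (shift n ?W)"
      proof (rule lex_lessI[of "d - n"])
        show "\<forall>i<d - n. ?W i = shift n ?W i"
        proof (intro allI impI)
          fix i assume i: "i < d - n"
          have "shift n ?W i = ?W (i + n)" by (simp add: shift_apply)
          also have "\<dots> = rper \<beta> r (i + n)" using d(1) i by simp
          also have "\<dots> = rper \<beta> r i" using rp by simp
          also have "\<dots> = ?W i" using d(1) i by simp
          finally show "?W i = shift n ?W i" by simp
        qed
        have "shift n ?W (d - n) = ?W d" using dn by (simp add: shift_apply)
        moreover have "rper \<beta> r d = rper \<beta> r (d - n)" using rp dn n0
          by (metis le_add_diff_inverse2 mod_add_self2)
        moreover have "rper \<beta> r (d - n) = ?W (d - n)" using d(1) n0 dn by simp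
        ultimately show "?W (d - n) < shift n ?W (d - n)" using d(2) by simp
      qed
      moreover have "lex_less (shift n ?W) ?W"
        using greedy_strict[OF b1, of "(Tb \<beta> ^^ n) t" t] hn Tr[of n] t1 shift_greedy[OF b1] by simp
      ultimately show False using lex_less_asym by blast
    qed
    then show ?thesis using ne lex_total by blast
  qed
  have "t < rstar \<beta> r"
  proof -
    consider (A) "rper \<beta> r \<in> SigmaB \<beta>" | (B) "rper \<beta> r \<notin> SigmaB \<beta>" "greedy \<beta> r 0 = gam \<beta>"
      | (C) "rper \<beta> r \<notin> SigmaB \<beta>" "greedy \<beta> r 0 \<noteq> gam \<beta>" by blast
    then show ?thesis
    proof cases
      case A
      then show ?thesis unfolding rstar_def using VC1[OF b1 t1 bd_rper[OF b1] Wlt] rpos r1 by simp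
    next
      case B then show ?thesis unfolding rstar_def using piv_alpha[OF b1] t1 by simp
    next
      case C
      have "lex_less ?W (rtilde \<beta> r)" using Wlt rtilde_props(3)[OF b1 br C] lex_less_le_trans by blast
      then show ?thesis unfolding rstar_def
        using C VC1[OF b1 t1 SigmaB_bd[OF b1 rtilde_props(1)[OF b1 br C]]] by simp
    qed
  qed
  then show ?thesis using rQ rt unfolding Istar_def by auto
qed

theorem mainTheorem5:
  fixes \<beta> :: real
  assumes "\<beta> > 1"
  shows "{0..<1} - Ubif \<beta> = (\<Union>r\<in>QB \<beta>. Istar \<beta> r)"
  using supset_part[OF assms] subset_part[OF assms] by blast



end
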